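(* Let $f=(v_1,v_2,v_3)$ be a non-degenerate counterclockwise triangle with vertices $z_1,z_2,z_3\in\mathbb C$, circumradius $R(f)$ and (positive) area $\mathrm{Area}(f)=\frac1{4\mathrm i}\big((z_3-z_1)(\bar z_2-\bar z_1)-(z_2-z_1)(\bar z_3-\bar z_1)\big)$. Let $D(f)_{i\bar j}=-\frac{\partial^2}{\partial z_i\partial\bar z_j}\mathrm{Vol}(f)$, $i,j\in\{1,2,3\}$. Then for all $\Phi,\Psi:\{v_1,v_2,v_3\}\to\mathbb C$, $$\sum_{i,j=1}^3\Phi(v_i)D(f)_{i\bar j}\overline{\Psi(v_j)}=\frac{\mathrm{Area}(f)}{R(f)^2}\,\overline\nabla\Phi(f)\,\nabla\overline\Psi(f),$$ where $\overline\Psi$ denotes the function $v\mapsto\overline{\Psi(v)}$.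
   Context: $\mathrm{Vol}(f)=\mathrm{Im}\,\mathrm{Li}_2(u)+\ln|u|\,\mathrm{Arg}(1-u)$, $u=\frac{z_3-z_1}{z_2-z_1}$ (Bloch–Wigner function; hyperbolic volume of the ideal tetrahedron $(z_1,z_2,z_3,\infty)$). Discrete derivatives of a function $\Phi$ on the vertices: $\nabla\Phi(f)=\frac1{4\mathrm i}\frac{\Phi(v_1)(\bar z_3-\bar z_2)+\Phi(v_2)(\bar z_1-\bar z_3)+\Phi(v_3)(\bar z_2-\bar z_1)}{\mathrm{Area}(f)}$ and $\overline\nabla\Phi(f)=-\frac1{4\mathrm i}\frac{\Phi(v_1)(z_3-z_2)+\Phi(v_2)(z_1-z_3)+\Phi(v_3)(z_2-z_1)}{\mathrm{Area}(f)}$. Derivatives in $z_i,\bar z_j$ are Wirtinger derivatives. *)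

theory Defs
  imports "HOL-Analysis.Analysis"
begin

text \<open>Dilogarithm (principal branch): Li2 u = - integral over [0,1] of Ln(1 - t u)/t dt,
  i.e. the integral of -Ln(1-s)/s along the segment from 0 to u.\<close>
definition Li2 :: "complex \<Rightarrow> complex" where
  "Li2 u = - integral {0..1::real} (\<lambda>t. Ln (1 - of_real t * u) / of_real t)"

text \<open>Bloch--Wigner function / hyperbolic volume of the ideal tetrahedron (z1,z2,z3,\<infinity>).\<close>
definition Vol :: "complex \<Rightarrow> complex \<Rightarrow> complex \<Rightarrow> real" where
  "Vol z1 z2 z3 = (let u = (z3 - z1) / (z2 - z1) in
     Im (Li2 u) + ln (cmod u) * Arg (1 - u))"

definition VolF :: "(nat \<Rightarrow> complex) \<Rightarrow> complex" where
  "VolF w = complex_of_real (Vol (w 1) (w 2) (w 3))"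

definition dirD :: "((nat \<Rightarrow> complex) \<Rightarrow> complex) \<Rightarrow> (nat \<Rightarrow> complex) \<Rightarrow> (nat \<Rightarrow> complex) \<Rightarrow> complex" where
  "dirD F d z = vector_derivative (\<lambda>t::real. F (\<lambda>k. z k + of_real t * d k)) (at 0)"

definition unitdir :: "nat \<Rightarrow> complex \<Rightarrow> nat \<Rightarrow> complex" where
  "unitdir i c = (\<lambda>k. if k = i then c else 0)"

definition Wz :: "nat \<Rightarrow> ((nat \<Rightarrow> complex) \<Rightarrow> complex) \<Rightarrow> (nat \<Rightarrow> complex) \<Rightarrow> complex" where
  "Wz i F z = (dirD F (unitdir i 1) z - \<i> * dirD F (unitdir i \<i>) z) / 2"

definition Wzbar :: "nat \<Rightarrow> ((nat \<Rightarrow> complex) \<Rightarrow> complex) \<Rightarrow> (nat \<Rightarrow> complex) \<Rightarrow> complex" where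
  "Wzbar i F z = (dirD F (unitdir i 1) z + \<i> * dirD F (unitdir i \<i>) z) / 2"

definition Dmat :: "(nat \<Rightarrow> complex) \<Rightarrow> nat \<Rightarrow> nat \<Rightarrow> complex" where
  "Dmat z i j = - Wz i (Wzbar j VolF) z"

definition Area :: "(nat \<Rightarrow> complex) \<Rightarrow> real" where
  "Area z = Re (((z 3 - z 1) * cnj (z 2 - z 1) - (z 2 - z 1) * cnj (z 3 - z 1)) / (4 * \<i>))"

definition circumradius :: "(nat \<Rightarrow> complex) \<Rightarrow> real" where
  "circumradius z = (THE r. \<exists>c. cmod (z 1 - c) = r \<and> cmod (z 2 - c) = r \<and> cmod (z 3 - c) = r)"

definition nabla :: "(nat \<Rightarrow> complex) \<Rightarrow> (nat \<Rightarrow> complex) \<Rightarrow> complex" where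
  "nabla z \<Phi> = (1 / (4 * \<i>)) * (\<Phi> 1 * (cnj (z 3) - cnj (z 2)) + \<Phi> 2 * (cnj (z 1) - cnj (z 3))
      + \<Phi> 3 * (cnj (z 2) - cnj (z 1))) / complex_of_real (Area z)"

definition nablabar :: "(nat \<Rightarrow> complex) \<Rightarrow> (nat \<Rightarrow> complex) \<Rightarrow> complex" where
  "nablabar z \<Phi> = - (1 / (4 * \<i>)) * (\<Phi> 1 * (z 3 - z 2) + \<Phi> 2 * (z 1 - z 3)
      + \<Phi> 3 * (z 2 - z 1)) / complex_of_real (Area z)"

end

theory Submission
  imports Defs "HOL-Complex_Analysis.Complex_Analysis"
begin


definition gfun :: "complex \<Rightarrow> complex" where
  "gfun s = (if s = 0 then 1 else - Ln (1 - s) / s)"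

definition Sdom :: "complex set" where
  "Sdom = {s. 0 < Im s} \<union> ball 0 1"

lemma open_Sdom: "open Sdom"
  unfolding Sdom_def by (intro open_Un open_halfspace_Im_gt open_ball)

lemma seg_Sdom: "x \<in> Sdom \<Longrightarrow> closed_segment 0 x \<subseteq> Sdom"
proof
  fix y assume x: "x \<in> Sdom" and y: "y \<in> closed_segment 0 x"
  then obtain u where u: "0 \<le> u" "u \<le> 1" "y = u *\<^sub>R x" by (auto simp: in_segment)
  show "y \<in> Sdom"
  proof (cases "u = 0")
    case True then show ?thesis using u by (simp add: Sdom_def)
  next
    case False
    with u have up: "u > 0" by simp
    show ?thesis
    proof (cases "0 < Im x")
      case True then show ?thesis using up u by (simp add: Sdom_def)
    next
      case False
      then have "norm x < 1" using x by (auto simp: Sdom_def)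
      have "norm y = u * norm x" using u by simp
      also have "\<dots> \<le> norm x" using u by (simp add: mult_left_le_one_le)
      finally have "norm y < 1" using \<open>norm x < 1\<close> by simp
      then show ?thesis by (simp add: Sdom_def)
    qed
  qed
qed

lemma zero_Sdom: "0 \<in> Sdom" by (simp add: Sdom_def)

lemma one_minus_notin: "s \<in> Sdom \<Longrightarrow> 1 - s \<notin> \<real>\<^sub>\<le>\<^sub>0"
  by (auto simp: Sdom_def complex_nonpos_Reals_iff dist_norm abs_Re_le_cmod[THEN order.strict_trans1] dest!: abs_Re_le_cmod[of s, THEN order.strict_trans1])

lemma Ln1_deriv: "s \<in> Sdom \<Longrightarrow> ((\<lambda>s. Ln (1 - s)) has_field_derivative - inverse (1 - s)) (at s)"
  using one_minus_notin[of s]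
  by (auto intro!: derivative_eq_intros)

lemma gfun_deriv:
  assumes "s \<in> Sdom" "s \<noteq> 0"
  shows "gfun field_differentiable at s"
proof -
  have "((\<lambda>s. - Ln (1 - s) / s) has_field_derivative
        (- (- inverse (1 - s)) * s - (- Ln (1 - s)) * 1) / (s * s)) (at s)"
    using assms Ln1_deriv[OF assms(1)]
    by (intro derivative_intros) auto
  then have "(gfun has_field_derivative
        (- (- inverse (1 - s)) * s - (- Ln (1 - s)) * 1) / (s * s)) (at s)"
    by (rule has_field_derivative_transform_within_open[where S="-{0}"])
       (use assms in \<open>auto simp: gfun_def\<close>)
  then show ?thesis by (auto simp: field_differentiable_def)
qed

lemma gfun_cont0: "isCont gfun 0"
proof -
  have "((\<lambda>s. Ln (1 - s)) has_field_derivative - inverse (1 - 0)) (at 0)"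
    using Ln1_deriv[OF zero_Sdom] .
  then have "((\<lambda>y. (Ln (1 - y) - Ln (1 - 0)) / (y - 0)) \<longlongrightarrow> - 1) (at 0)"
    by (simp add: has_field_derivative_iff)
  then have "((\<lambda>y. - (Ln (1 - y) / y)) \<longlongrightarrow> - (- 1)) (at 0)"
    by (intro tendsto_minus) simp
  moreover have "eventually (\<lambda>y. - (Ln (1 - y) / y) = gfun y) (at 0)"
    by (auto simp: gfun_def eventually_at_filter)
  ultimately have "(gfun \<longlongrightarrow> 1) (at 0)"
    using Lim_transform_eventually by fastforce
  then show ?thesis by (simp add: isCont_def gfun_def)
qed

lemma gfun_cont: "continuous_on Sdom gfun"
proof -
  have "isCont gfun s" if "s \<in> Sdom" for s
  proof (cases "s = 0")
    case True then show ?thesis using gfun_cont0 by simp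
  next
    case False then show ?thesis using gfun_deriv[OF that False]
      by (simp add: field_differentiable_imp_continuous_at)
  qed
  then show ?thesis by (simp add: continuous_at_imp_continuous_on)
qed

lemma prim_deriv:
  assumes x: "x \<in> Sdom"
  shows "((\<lambda>x. contour_integral (linepath 0 x) gfun) has_field_derivative gfun x) (at x)"
proof -
  { fix b c
    assume "closed_segment b c \<subseteq> Sdom"
    then have abcs: "convex hull {0, b, c} \<subseteq> Sdom"
      by (simp add: zero_Sdom seg_Sdom starlike_convex_subset)
    then have "continuous_on (convex hull {0, b, c}) gfun"
      by (simp add: continuous_on_subset [OF gfun_cont])
    then have "(gfun has_contour_integral 0) (linepath 0 b +++ linepath b c +++ linepath c 0)"
      using abcs interior_subset
      by (force intro: gfun_deriv Cauchy_theorem_triangle_cofinite [of _ _ _ _ "{0}"])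
  } note 0 = this
  show ?thesis
    using 0 zero_Sdom seg_Sdom gfun_cont has_chain_integral_chain_integral3 open_Sdom x
       triangle_contour_integrals_starlike_primitive by force
qed

lemma aux_div: "(c::complex) \<noteq> 0 \<Longrightarrow> x \<noteq> 0 \<Longrightarrow> - L / (c * x) * x = - (L / c)"
  by (simp add: field_simps)

lemma Li2_eq:
  assumes x: "x \<in> Sdom" "x \<noteq> 0"
  shows "Li2 x = contour_integral (linepath 0 x) gfun"
proof -
  have "gfun contour_integrable_on linepath 0 x"
    by (rule contour_integrable_continuous_linepath)
       (rule continuous_on_subset[OF gfun_cont seg_Sdom[OF x(1)]])
  then have "(gfun has_contour_integral contour_integral (linepath 0 x) gfun) (linepath 0 x)"
    by (rule has_contour_integral_integral)
  then have h: "((\<lambda>t. gfun (linepath 0 x t) * (x - 0)) has_integral contour_integral (linepath 0 x) gfun) {0..1}"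
    by (simp add: has_contour_integral_linepath)
  have "((\<lambda>t. - (Ln (1 - of_real t * x) / of_real t)) has_integral contour_integral (linepath 0 x) gfun) {0..1}"
  proof (rule has_integral_spike[OF negligible_sing[of 0] _ h])
    fix t :: real assume "t \<in> {0..1} - {0}"
    then have "t \<noteq> 0" by auto
    show "- (Ln (1 - of_real t * x) / of_real t) = gfun (linepath 0 x t) * (x - 0)"
    proof -
      have lp: "linepath 0 x t = of_real t * x" by (simp add: linepath_def scaleR_conv_of_real)
      have nz: "of_real t * x \<noteq> 0" using \<open>t \<noteq> 0\<close> x by simp
      have "gfun (linepath 0 x t) * (x - 0) = - Ln (1 - of_real t * x) / (of_real t * x) * x"
        unfolding lp gfun_def by (simp only: if_not_P[OF nz] diff_zero)
      also have "\<dots> = - (Ln (1 - of_real t * x) / of_real t)"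
        by (rule aux_div) (use \<open>t \<noteq> 0\<close> x in auto)
      finally show ?thesis by simp
    qed
  qed
  from has_integral_neg[OF this]
  have "((\<lambda>t. Ln (1 - of_real t * x) / of_real t) has_integral - contour_integral (linepath 0 x) gfun) {0..1}"
    by (simp only: minus_minus)
  then have "integral {0..1} (\<lambda>t. Ln (1 - of_real t * x) / of_real t) = - contour_integral (linepath 0 x) gfun"
    by (rule integral_unique)
  then show ?thesis unfolding Li2_def by (simp only: minus_minus)
qed

lemma Li2_deriv:
  assumes "0 < Im x"
  shows "(Li2 has_field_derivative - Ln (1 - x) / x) (at x)"
proof -
  have x: "x \<in> Sdom" "x \<noteq> 0" using assms by (auto simp: Sdom_def)
  have "((\<lambda>x. contour_integral (linepath 0 x) gfun) has_field_derivative gfun x) (at x)"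
    by (rule prim_deriv[OF x(1)])
  moreover have "\<And>y. y \<in> {s. 0 < Im s} \<Longrightarrow> contour_integral (linepath 0 y) gfun = Li2 y"
  proof -
    fix y assume "y \<in> {s. 0 < Im s}"
    then have "y \<in> Sdom" "y \<noteq> 0" by (auto simp: Sdom_def)
    then show "contour_integral (linepath 0 y) gfun = Li2 y" by (simp add: Li2_eq)
  qed
  ultimately have "(Li2 has_field_derivative gfun x) (at x)"
    using has_field_derivative_transform_within_open[OF _ open_halfspace_Im_gt, of _ _ x 0] assms by blast
  then show ?thesis using x by (simp add: gfun_def)
qed



definition WD :: "(complex \<Rightarrow> complex) \<Rightarrow> complex \<Rightarrow> complex \<Rightarrow> complex \<Rightarrow> bool" where
  "WD f u p q \<longleftrightarrow> (f has_derivative (\<lambda>h. p * h + q * cnj h)) (at u)"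

lemma WD_eq: "WD f u p q \<Longrightarrow> p = p' \<Longrightarrow> q = q' \<Longrightarrow> WD f u p' q'" by simp

lemma WD_holo: "(f has_field_derivative f') (at u) \<Longrightarrow> WD f u f' 0"
  unfolding WD_def has_field_derivative_def by (erule has_derivative_eq_rhs) auto

lemma WD_const: "WD (\<lambda>x. c) u 0 0"
  unfolding WD_def by (rule has_derivative_eq_rhs[OF has_derivative_const]) auto

lemma WD_cnj: "WD f u p q \<Longrightarrow> WD (\<lambda>x. cnj (f x)) u (cnj q) (cnj p)"
  unfolding WD_def
  by (drule bounded_linear.has_derivative[OF bounded_linear_cnj]) (erule has_derivative_eq_rhs, auto)

lemma WD_add: "WD f u p1 q1 \<Longrightarrow> WD g u p2 q2 \<Longrightarrow> WD (\<lambda>x. f x + g x) u (p1 + p2) (q1 + q2)"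
  unfolding WD_def by (drule (1) has_derivative_add) (erule has_derivative_eq_rhs, auto simp: algebra_simps)

lemma WD_diff: "WD f u p1 q1 \<Longrightarrow> WD g u p2 q2 \<Longrightarrow> WD (\<lambda>x. f x - g x) u (p1 - p2) (q1 - q2)"
  unfolding WD_def by (drule (1) has_derivative_diff) (erule has_derivative_eq_rhs, auto simp: algebra_simps)

lemma WD_mult: "WD f u p1 q1 \<Longrightarrow> WD g u p2 q2 \<Longrightarrow>
   WD (\<lambda>x. f x * g x) u (f u * p2 + p1 * g u) (f u * q2 + q1 * g u)"
  unfolding WD_def by (drule (1) has_derivative_mult) (erule has_derivative_eq_rhs, auto simp: algebra_simps)

lemma WD_divide: "WD f u p1 q1 \<Longrightarrow> WD g u p2 q2 \<Longrightarrow> g u \<noteq> 0 \<Longrightarrow>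
   WD (\<lambda>x. f x / g x) u ((p1 * g u - f u * p2) / (g u * g u)) ((q1 * g u - f u * q2) / (g u * g u))"
  unfolding WD_def by (drule (2) has_derivative_divide') (erule has_derivative_eq_rhs, auto simp: algebra_simps add_divide_distrib diff_divide_distrib)

lemma WD_comp: "WD g u p q \<Longrightarrow> (f has_field_derivative f') (at (g u)) \<Longrightarrow>
   WD (\<lambda>x. f (g x)) u (f' * p) (f' * q)"
  unfolding WD_def has_field_derivative_def
  by (drule (1) has_derivative_compose) (erule has_derivative_eq_rhs, auto simp: algebra_simps)

lemma WD_id: "WD (\<lambda>x. x) u 1 0"
  unfolding WD_def by (rule has_derivative_eq_rhs[OF has_derivative_ident]) auto

lemma WD_transform: "WD f u p q \<Longrightarrow> open S \<Longrightarrow> u \<in> S \<Longrightarrow> (\<And>x. x \<in> S \<Longrightarrow> f x = g x) \<Longrightarrow> WD g u p q"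
  unfolding WD_def by (rule has_derivative_transform_within_open)

definition phi0 :: "complex \<Rightarrow> complex" where
  "phi0 u = complex_of_real (Im (Li2 u) + ln (cmod u) * Arg (1 - u))"

definition q0 :: "complex \<Rightarrow> complex" where
  "q0 u = ((Ln (1 - u) + cnj (Ln (1 - u))) / cnj u + (Ln u + cnj (Ln u)) / (1 - cnj u)) / (4 * \<i>)"

definition p1 :: "complex \<Rightarrow> complex" where
  "p1 u = (- inverse (1 - u) / cnj u + inverse u / (1 - cnj u)) / (4 * \<i>)"

definition F0 :: "complex \<Rightarrow> complex" where
  "F0 u = (Li2 u - cnj (Li2 u)) / (2 * \<i>) + (Ln u + cnj (Ln u)) / 2 * ((Ln (1 - u) - cnj (Ln (1 - u))) / (2 * \<i>))"

lemma UHP_facts: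
  assumes "0 < Im u"
  shows "u \<noteq> 0" "1 - u \<noteq> 0" "cnj u \<noteq> 0" "1 - cnj u \<noteq> 0" "u \<notin> \<real>\<^sub>\<le>\<^sub>0" "1 - u \<notin> \<real>\<^sub>\<le>\<^sub>0"
  using assms by (auto simp: complex_eq_iff complex_nonpos_Reals_iff)

lemma phi0_F0: assumes "0 < Im u" shows "phi0 u = F0 u"
proof -
  note f = UHP_facts[OF assms]
  have 1: "(Li2 u - cnj (Li2 u)) / (2 * \<i>) = complex_of_real (Im (Li2 u))"
    by (simp add: complex_diff_cnj field_simps)
  have 2: "(Ln u + cnj (Ln u)) / 2 = complex_of_real (ln (cmod u))"
    using f by (simp add: complex_add_cnj)
  have 3: "(Ln (1 - u) - cnj (Ln (1 - u))) / (2 * \<i>) = complex_of_real (Arg (1 - u))"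
    using f by (simp add: complex_diff_cnj Arg_eq_Im_Ln field_simps)
  have "F0 u = complex_of_real (Im (Li2 u)) + complex_of_real (ln (cmod u)) * complex_of_real (Arg (1 - u))"
    unfolding F0_def 1 2 3 by (rule refl)
  then show ?thesis unfolding phi0_def by simp
qed

lemma ln_deriv: "0 < Im u \<Longrightarrow> ((\<lambda>u. Ln (1 - u)) has_field_derivative - inverse (1 - u)) (at u)"
  using UHP_facts[of u] by (auto intro!: derivative_eq_intros)

lemma WD_phi0: assumes "0 < Im u" shows "\<exists>p. WD phi0 u p (q0 u)"
proof -
  note f = UHP_facts[OF assms]
  have L: "WD Li2 u (- Ln (1 - u) / u) 0" by (rule WD_holo[OF Li2_deriv[OF assms]])
  have A: "WD Ln u (inverse u) 0" by (rule WD_holo[OF has_field_derivative_Ln[OF f(5)]])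
  have C: "WD (\<lambda>u. Ln (1 - u)) u (- inverse (1 - u)) 0" by (rule WD_holo[OF ln_deriv[OF assms]])
  have c2: "WD (\<lambda>x. 2 * \<i>) u 0 0" "WD (\<lambda>x. 2) u 0 0" by (rule WD_const)+
  have ti: "2 * \<i> \<noteq> (0::complex)" and tw: "(2::complex) \<noteq> 0" by auto
  note W1 = WD_divide[OF WD_diff[OF L WD_cnj[OF L]] c2(1) ti]
  note W2 = WD_divide[OF WD_add[OF A WD_cnj[OF A]] c2(2) tw]
  note W3 = WD_divide[OF WD_diff[OF C WD_cnj[OF C]] c2(1) ti]
  note W = WD_add[OF W1 WD_mult[OF W2 W3]]
  have W': "WD phi0 u P Q" if "WD F0 u P Q" for P Q
    using WD_transform[OF that open_halfspace_Im_gt[of 0]] assms phi0_F0 by auto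
  from W'[OF W[folded F0_def]] show ?thesis
    apply -
    apply (rule exI)
    apply (erule WD_eq)
     apply (rule refl)
    using f apply (simp add: q0_def field_simps)
    done
qed

lemma gen_alg: "(a::complex) \<noteq> 0 \<Longrightarrow> b \<noteq> 0 \<Longrightarrow> k \<noteq> 0 \<Longrightarrow>
   ((x * a) / (a * a) + (y * b) / (b * b)) * k / (k * k) = (x / a + y / b) / k"
  by (simp add: field_simps)

lemma WD_q0: assumes "0 < Im u" shows "\<exists>q. WD q0 u (p1 u) q"
proof -
  note f = UHP_facts[OF assms]
  have A: "WD Ln u (inverse u) 0" by (rule WD_holo[OF has_field_derivative_Ln[OF f(5)]])
  have C: "WD (\<lambda>u. Ln (1 - u)) u (- inverse (1 - u)) 0" by (rule WD_holo[OF ln_deriv[OF assms]])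
  have c4: "WD (\<lambda>x. 4 * \<i>) u 0 0" by (rule WD_const)
  have ti: "4 * \<i> \<noteq> (0::complex)" by auto
  note cj = WD_cnj[OF WD_id[of u]]
  note cj1 = WD_diff[OF WD_const[of 1 u] cj]
  note W1 = WD_divide[OF WD_add[OF C WD_cnj[OF C]] cj f(3)]
  note W2 = WD_divide[OF WD_add[OF A WD_cnj[OF A]] cj1 f(4)]
  note W = WD_divide[OF WD_add[OF W1 W2] c4 ti]
  have W': "WD q0 u P Q" if "WD (\<lambda>x. ((Ln (1 - x) + cnj (Ln (1 - x))) / cnj x + (Ln x + cnj (Ln x)) / (1 - cnj x)) / (4 * \<i>)) u P Q" for P Q
    using that unfolding q0_def[abs_def] .
  from W'[OF W] show ?thesis
    apply -
    apply (rule exI)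
    apply (erule WD_eq)
     prefer 2 apply (rule refl)
    apply (simp only: complex_cnj_zero add_0_right add_0_left mult_zero_right mult_zero_left diff_0_right diff_self p1_def)
    apply (rule gen_alg)
    using f ti by auto
qed



definition U :: "(nat \<Rightarrow> complex) \<Rightarrow> complex" where
  "U w = (w 3 - w 1) / (w 2 - w 1)"

definition dU :: "nat \<Rightarrow> (nat \<Rightarrow> complex) \<Rightarrow> complex" where
  "dU i w = (if i = 1 then (w 3 - w 2) / (w 2 - w 1)^2 else if i = 2 then - (w 3 - w 1) / (w 2 - w 1)^2
             else 1 / (w 2 - w 1))"

definition shift :: "(nat \<Rightarrow> complex) \<Rightarrow> nat \<Rightarrow> complex \<Rightarrow> nat \<Rightarrow> complex" where
  "shift z i s = (\<lambda>k. z k + s * unitdir i 1 k)"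

lemma line_eq: "(\<lambda>k. z k + complex_of_real t * unitdir i c k) = shift z i (complex_of_real t * c)"
  by (auto simp: shift_def unitdir_def fun_eq_iff)

lemma shift0[simp]: "shift z i 0 = z" by (simp add: shift_def)

lemma U_line:
  assumes "i \<in> {1,2,3}" "z 2 \<noteq> z 1"
  shows "((\<lambda>s. U (shift z i s)) has_field_derivative dU i z) (at 0)"
proof -
  have n: "z 2 - z 1 \<noteq> 0" using assms by simp
  consider "i = 1" | "i = 2" | "i = 3" using assms by auto
  then show ?thesis
  proof cases
    case 1
    have e: "(\<lambda>s. U (shift z i s)) = (\<lambda>s. (z 3 - (z 1 + s)) / (z 2 - (z 1 + s)))"
      using 1 by (simp add: U_def shift_def unitdir_def fun_eq_iff)
    show ?thesis unfolding e using 1 n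
      by (auto intro!: derivative_eq_intros simp: dU_def power2_eq_square field_simps)
  next
    case 2
    have e: "(\<lambda>s. U (shift z i s)) = (\<lambda>s. (z 3 - z 1) / (z 2 + s - z 1))"
      using 2 by (simp add: U_def shift_def unitdir_def fun_eq_iff)
    show ?thesis unfolding e using 2 n
      by (auto intro!: derivative_eq_intros simp: dU_def power2_eq_square field_simps)
  next
    case 3
    have e: "(\<lambda>s. U (shift z i s)) = (\<lambda>s. (z 3 + s - z 1) / (z 2 - z 1))"
      using 3 by (simp add: U_def shift_def unitdir_def fun_eq_iff)
    show ?thesis unfolding e using 3 n
      by (auto intro!: derivative_eq_intros simp: dU_def divide_simps)
  qed
qed

lemma dU_line:
  assumes "z 2 \<noteq> z 1"
  shows "(\<lambda>s. dU j (shift z i s)) field_differentiable at 0"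
proof -
  have n: "z 2 - z 1 \<noteq> 0" using assms by simp
  consider "j = 1" | "j = 2" | "j \<noteq> 1 \<and> j \<noteq> 2" by auto
  then show ?thesis
  proof cases
    case 1 then show ?thesis unfolding dU_def shift_def using n
      by (auto intro!: derivative_intros)
  next
    case 2 then show ?thesis unfolding dU_def shift_def using n
      by (auto intro!: derivative_intros)
  next
    case 3 then show ?thesis unfolding dU_def shift_def using n
      by (auto intro!: derivative_intros)
  qed
qed

lemma real_line:
  assumes "((\<lambda>s. G (shift z i s)) has_field_derivative D) (at 0)"
  shows "((\<lambda>t. G (shift z i (complex_of_real t * c))) has_vector_derivative (D * c)) (at 0)"
proof -
  have d1: "((\<lambda>s. s * c) has_field_derivative c) (at 0)"
    by (auto intro!: derivative_eq_intros)
  have "((\<lambda>s. G (shift z i (s * c))) has_field_derivative D * c) (at 0)"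
    using DERIV_chain2[of "\<lambda>s. G (shift z i s)" D "\<lambda>s. s * c" 0 c] assms d1 by simp
  then show ?thesis
    using has_vector_derivative_real_field[of "\<lambda>s. G (shift z i (s * c))" "D * c" 0] by simp
qed

lemma WD_line:
  assumes "i \<in> {1,2,3}" "z 2 \<noteq> z 1" "WD \<phi> (U z) p q"
  shows "((\<lambda>t. \<phi> (U (shift z i (complex_of_real t * c)))) has_vector_derivative
           (p * (dU i z * c) + q * cnj (dU i z * c))) (at 0)"
proof -
  have h: "((\<lambda>t. U (shift z i (complex_of_real t * c))) has_vector_derivative dU i z * c) (at 0)"
    by (rule real_line[OF U_line[OF assms(1,2)]])
  have h': "((\<lambda>t. U (shift z i (complex_of_real t * c))) has_derivative (\<lambda>h. h *\<^sub>R (dU i z * c))) (at 0)"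
    using h by (simp add: has_vector_derivative_def)
  have ph: "(\<phi> has_derivative (\<lambda>h. p * h + q * cnj h)) (at (U (shift z i (complex_of_real 0 * c))))"
    using assms(3) by (simp add: WD_def)
  have "((\<lambda>t. \<phi> (U (shift z i (complex_of_real t * c)))) has_derivative
        (\<lambda>h. p * (h *\<^sub>R (dU i z * c)) + q * cnj (h *\<^sub>R (dU i z * c)))) (at 0)"
    by (rule has_derivative_compose[OF h' ph])
  then show ?thesis unfolding has_vector_derivative_def
    by (rule has_derivative_eq_rhs) (auto simp: fun_eq_iff scaleR_conv_of_real algebra_simps)
qed

lemma Wirt_extract:
  assumes "\<And>c. ((\<lambda>t. F (shift z i (complex_of_real t * c))) has_vector_derivative (A * c + B * cnj c)) (at 0)"
  shows "Wz i F z = A" "Wzbar i F z = B"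
proof -
  have "dirD F (unitdir i c) z = A * c + B * cnj c" for c
    unfolding dirD_def line_eq by (rule vector_derivative_at[OF assms])
  from this[of 1] this[of \<i>] show "Wz i F z = A" "Wzbar i F z = B"
    unfolding Wz_def Wzbar_def by (simp_all add: complex_eq_iff)
qed



lemma Area_eq: "Area w = (Re (w 2 - w 1) * Im (w 3 - w 1) - Im (w 2 - w 1) * Re (w 3 - w 1)) / 2"
  unfolding Area_def by (simp add: Re_divide algebra_simps) (simp add: field_simps)

lemma Area_facts:
  assumes "Area w > 0"
  shows "w 2 \<noteq> w 1" "0 < Im (U w)"
proof -
  show a: "w 2 \<noteq> w 1"
    using assms by (auto simp: Area_eq)
  have "Re (w 2 - w 1) * Im (w 3 - w 1) - Im (w 2 - w 1) * Re (w 3 - w 1) > 0"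
    using assms by (simp add: Area_eq)
  moreover have "(Re (w 2 - w 1))\<^sup>2 + (Im (w 2 - w 1))\<^sup>2 > 0"
    using a by (simp add: complex_eq_iff sum_power2_gt_zero_iff)
  ultimately show "0 < Im (U w)"
    by (simp add: U_def Im_divide algebra_simps)
qed

lemma VolF_eq: "VolF = (\<lambda>w. phi0 (U w))"
  by (simp add: VolF_def Vol_def phi0_def U_def Let_def fun_eq_iff)

lemma inner:
  assumes "Area w > 0" "j \<in> {1,2,3}"
  shows "Wzbar j VolF w = q0 (U w) * cnj (dU j w)"
proof -
  note f = Area_facts[OF assms(1)]
  obtain p where p: "WD phi0 (U w) p (q0 (U w))" using WD_phi0[OF f(2)] by blast
  have "((\<lambda>t. VolF (shift w j (complex_of_real t * c))) has_vector_derivative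
         (p * dU j w) * c + (q0 (U w) * cnj (dU j w)) * cnj c) (at 0)" for c
    using WD_line[OF assms(2) f(1) p, of c] unfolding VolF_eq by (simp add: algebra_simps)
  then show ?thesis by (rule Wirt_extract)
qed

lemma Area_cont: "isCont (\<lambda>t. Area (shift z i (complex_of_real t * c))) 0"
  unfolding Area_def shift_def by (auto intro!: continuous_intros)

lemma outer:
  assumes "Area z > 0" "i \<in> {1,2,3}" "j \<in> {1,2,3}"
  shows "Wz i (Wzbar j VolF) z = p1 (U z) * dU i z * cnj (dU j z)"
proof -
  note f = Area_facts[OF assms(1)]
  obtain q1 where q1: "WD q0 (U z) (p1 (U z)) q1" using WD_q0[OF f(2)] by blast
  obtain D where D: "((\<lambda>s. dU j (shift z i s)) has_field_derivative D) (at 0)"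
    using dU_line[OF f(1), of j i] by (auto simp: field_differentiable_def)
  have "((\<lambda>t. Wzbar j VolF (shift z i (complex_of_real t * c))) has_vector_derivative
         (p1 (U z) * dU i z * cnj (dU j z)) * c + (q1 * cnj (dU i z) * cnj (dU j z) + q0 (U z) * cnj D) * cnj c) (at 0)" for c
  proof -
    note h1 = WD_line[OF assms(2) f(1) q1, of c]
    note h2 = bounded_linear.has_vector_derivative[OF bounded_linear_cnj real_line[OF D, of c]]
    note h3 = has_vector_derivative_mult[OF h1 h2]
    have ev: "eventually (\<lambda>t. 0 < Area (shift z i (complex_of_real t * c))) (at 0)"
      using order_tendstoD(1)[OF Area_cont[of z i c, unfolded isCont_def]] assms(1) by simp
    then obtain d where d: "d > 0" "\<And>t. t \<noteq> 0 \<Longrightarrow> dist t 0 < d \<Longrightarrow> 0 < Area (shift z i (complex_of_real t * c))"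
      by (auto simp: eventually_at)
    have h4: "((\<lambda>t. Wzbar j VolF (shift z i (complex_of_real t * c))) has_vector_derivative
          (q0 (U z) * cnj (D * c) + (p1 (U z) * (dU i z * c) + q1 * cnj (dU i z * c)) * cnj (dU j z))) (at 0)"
    proof (rule has_vector_derivative_transform_within[OF _ d(1)])
      show "((\<lambda>t. q0 (U (shift z i (complex_of_real t * c))) * cnj (dU j (shift z i (complex_of_real t * c))))
            has_vector_derivative
          (q0 (U z) * cnj (D * c) + (p1 (U z) * (dU i z * c) + q1 * cnj (dU i z * c)) * cnj (dU j z))) (at 0)"
        using h3 by simp
    next
      fix t :: real assume "dist t 0 < d"
      then have "0 < Area (shift z i (complex_of_real t * c))"
        using d assms(1) by (cases "t = 0") auto
      then show "q0 (U (shift z i (complex_of_real t * c))) * cnj (dU j (shift z i (complex_of_real t * c)))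
            = Wzbar j VolF (shift z i (complex_of_real t * c))"
        using inner[OF _ assms(3)] by simp
    qed auto
    then show ?thesis by (simp add: algebra_simps)
  qed
  then show ?thesis by (rule Wirt_extract)
qed



lemma circ_real:
  fixes a1 a2 b1 b2 x y r :: real
  assumes "x^2 + y^2 = r^2" "(a1 - x)^2 + (a2 - y)^2 = r^2" "(b1 - x)^2 + (b2 - y)^2 = r^2"
  shows "r^2 * (4 * (a1 * b2 - a2 * b1)^2) = (a1^2 + a2^2) * (b1^2 + b2^2) * ((b1 - a1)^2 + (b2 - a2)^2)"
  using assms by algebra

lemma K_alg:
  fixes a b ca cb A R k :: complex
  assumes nz: "a \<noteq> 0" "b \<noteq> 0" "b - a \<noteq> 0" "ca \<noteq> 0" "cb \<noteq> 0" "cb - ca \<noteq> 0" "A \<noteq> 0" "k \<noteq> 0"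
    and A: "A = (b * ca - a * cb) / k" and R: "R = a * ca * b * cb * ((b - a) * (cb - ca)) / (16 * A^2)"
  shows "- ((- inverse (1 - b / a) / (cb / ca) + inverse (b / a) / (1 - cb / ca)) / k) = (a * ca)^2 / (16 * A * R)"
proof -
  have a: "a - b \<noteq> 0" "ca - cb \<noteq> 0" using nz by auto
  have 1: "inverse (1 - b / a) = a / (a - b)" "1 - cb / ca = (ca - cb) / ca" using nz a by (auto simp: field_simps)
  have "- ((- inverse (1 - b / a) / (cb / ca) + inverse (b / a) / (1 - cb / ca)) / k)
      = a * ca * ((b * ca - a * cb) / k) / (b * cb * ((a - b) * (ca - cb)))"
    unfolding 1 using nz a by (simp add: field_simps) (simp add: minus_divide_left algebra_simps)
  also have "\<dots> = a * ca * A / (b * cb * ((a - b) * (ca - cb)))" using A by simp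
  also have "\<dots> = (a * ca)^2 / (16 * A * R)"
  proof -
    have s: "(b - a) * (cb - ca) = (a - b) * (ca - cb)" by algebra
    define s where "s = b * cb * ((a - b) * (ca - cb))"
    have sn: "s \<noteq> 0" using nz a by (simp add: s_def)
    have R': "R = a * ca * s / (16 * A^2)" unfolding R s_def s by (simp add: mult.assoc)
    show ?thesis unfolding R' s_def[symmetric] using nz sn by (simp add: field_simps power2_eq_square)
  qed
  finally show ?thesis .
qed



lemma circ_sq:
  assumes "Area z > 0"
  shows "(circumradius z)^2 = (cmod (z 2 - z 1))^2 * (cmod (z 3 - z 1))^2 * (cmod ((z 3 - z 1) - (z 2 - z 1)))^2
           / (16 * (Area z)^2)"
proof -
  define a1 where "a1 = Re (z 2 - z 1)"
  define a2 where "a2 = Im (z 2 - z 1)"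
  define b1 where "b1 = Re (z 3 - z 1)"
  define b2 where "b2 = Im (z 3 - z 1)"
  define det where "det = a1 * b2 - a2 * b1"
  have det: "det = 2 * Area z" unfolding det_def a1_def a2_def b1_def b2_def Area_eq by simp
  have detnz: "det \<noteq> 0" using det assms by simp
  define RHS where "RHS = (a1^2 + a2^2) * (b1^2 + b2^2) * ((b1 - a1)^2 + (b2 - a2)^2) / (4 * det^2)"
  have RHS: "RHS = (cmod (z 2 - z 1))^2 * (cmod (z 3 - z 1))^2 * (cmod ((z 3 - z 1) - (z 2 - z 1)))^2
           / (16 * (Area z)^2)"
    unfolding RHS_def det cmod_power2 a1_def a2_def b1_def b2_def by (simp add: power2_eq_square)
  have key: "r^2 = RHS" if h: "cmod (z 1 - c) = r" "cmod (z 2 - c) = r" "cmod (z 3 - c) = r" for r c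
  proof -
    define x where "x = Re (c - z 1)"
    define y where "y = Im (c - z 1)"
    have e1: "x^2 + y^2 = r^2" using h(1) unfolding x_def y_def
      by (metis cmod_power2 minus_complex.simps norm_minus_commute)
    have e2: "(a1 - x)^2 + (a2 - y)^2 = r^2"
    proof -
      have "z 2 - c = (z 2 - z 1) - (c - z 1)" by simp
      then show ?thesis using h(2) unfolding x_def y_def a1_def a2_def
        by (metis cmod_power2 minus_complex.simps)
    qed
    have e3: "(b1 - x)^2 + (b2 - y)^2 = r^2"
    proof -
      have "z 3 - c = (z 3 - z 1) - (c - z 1)" by simp
      then show ?thesis using h(3) unfolding x_def y_def b1_def b2_def
        by (metis cmod_power2 minus_complex.simps)
    qed
    have "r^2 * (4 * det^2) = (a1^2 + a2^2) * (b1^2 + b2^2) * ((b1 - a1)^2 + (b2 - a2)^2)"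
      unfolding det_def by (rule circ_real[OF e1 e2 e3])
    then show ?thesis unfolding RHS_def using detnz by (simp add: field_simps)
  qed
  define x0 where "x0 = ((a1^2 + a2^2) * b2 - (b1^2 + b2^2) * a2) / (2 * det)"
  define y0 where "y0 = ((b1^2 + b2^2) * a1 - (a1^2 + a2^2) * b1) / (2 * det)"
  define c0 where "c0 = z 1 + Complex x0 y0"
  define r0 where "r0 = cmod (z 1 - c0)"
  have sq1: "(cmod (z 1 - c0))^2 = x0^2 + y0^2" unfolding c0_def cmod_power2 by simp
  have sq2: "(cmod (z 2 - c0))^2 = (a1 - x0)^2 + (a2 - y0)^2"
    unfolding c0_def cmod_power2 a1_def a2_def by (simp add: diff_diff_eq)
  have sq3: "(cmod (z 3 - c0))^2 = (b1 - x0)^2 + (b2 - y0)^2"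
    unfolding c0_def cmod_power2 b1_def b2_def by (simp add: diff_diff_eq)
  have l1: "(a1 - x0)^2 + (a2 - y0)^2 = x0^2 + y0^2"
  proof -
    have p: "a1 * ((a1^2 + a2^2) * b2 - (b1^2 + b2^2) * a2) + a2 * ((b1^2 + b2^2) * a1 - (a1^2 + a2^2) * b1) = (a1^2 + a2^2) * det"
      unfolding det_def by algebra
    have "a1 * x0 + a2 * y0 = (a1 * ((a1^2 + a2^2) * b2 - (b1^2 + b2^2) * a2) + a2 * ((b1^2 + b2^2) * a1 - (a1^2 + a2^2) * b1)) / (2 * det)"
      unfolding x0_def y0_def using detnz by (simp add: add_divide_distrib)
    then have "2 * (a1 * x0 + a2 * y0) = a1^2 + a2^2" unfolding p using detnz by simp
    then show ?thesis by (simp add: algebra_simps power2_eq_square)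
  qed
  have l2: "(b1 - x0)^2 + (b2 - y0)^2 = x0^2 + y0^2"
  proof -
    have p: "b1 * ((a1^2 + a2^2) * b2 - (b1^2 + b2^2) * a2) + b2 * ((b1^2 + b2^2) * a1 - (a1^2 + a2^2) * b1) = (b1^2 + b2^2) * det"
      unfolding det_def by algebra
    have "b1 * x0 + b2 * y0 = (b1 * ((a1^2 + a2^2) * b2 - (b1^2 + b2^2) * a2) + b2 * ((b1^2 + b2^2) * a1 - (a1^2 + a2^2) * b1)) / (2 * det)"
      unfolding x0_def y0_def using detnz by (simp add: add_divide_distrib)
    then have "2 * (b1 * x0 + b2 * y0) = b1^2 + b2^2" unfolding p using detnz by simp
    then show ?thesis by (simp add: algebra_simps power2_eq_square)
  qed
  have P0: "\<exists>c. cmod (z 1 - c) = r0 \<and> cmod (z 2 - c) = r0 \<and> cmod (z 3 - c) = r0"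
  proof (intro exI conjI)
    show "cmod (z 1 - c0) = r0" by (simp add: r0_def)
    show "cmod (z 2 - c0) = r0" unfolding r0_def
      by (rule power2_eq_imp_eq) (use sq1 sq2 l1 in auto)
    show "cmod (z 3 - c0) = r0" unfolding r0_def
      by (rule power2_eq_imp_eq) (use sq1 sq3 l2 in auto)
  qed
  have "circumradius z = r0"
    unfolding circumradius_def
  proof (rule the_equality)
    show "\<exists>c. cmod (z 1 - c) = r0 \<and> cmod (z 2 - c) = r0 \<and> cmod (z 3 - c) = r0" by (rule P0)
  next
    fix r assume "\<exists>c. cmod (z 1 - c) = r \<and> cmod (z 2 - c) = r \<and> cmod (z 3 - c) = r"
    then obtain c where c: "cmod (z 1 - c) = r" "cmod (z 2 - c) = r" "cmod (z 3 - c) = r" by blast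
    from P0 obtain c' where c': "cmod (z 1 - c') = r0" "cmod (z 2 - c') = r0" "cmod (z 3 - c') = r0" by blast
    have "r^2 = r0^2" using key[OF c] key[OF c'] by simp
    moreover have "0 \<le> r" "0 \<le> r0" using c(1) c'(1) by auto
    ultimately show "r = r0" by (rule power2_eq_imp_eq)
  qed
  moreover obtain c where "cmod (z 1 - c) = r0" "cmod (z 2 - c) = r0" "cmod (z 3 - c) = r0" using P0 by blast
  ultimately show ?thesis using key[of c r0] RHS by simp
qed



lemma Area_complex: "complex_of_real (Area z) = ((z 3 - z 1) * cnj (z 2 - z 1) - (z 2 - z 1) * cnj (z 3 - z 1)) / (4 * \<i>)"
  by (simp add: Area_def complex_eq_iff Re_divide Im_divide algebra_simps) (simp add: field_simps)

lemma fin_alg: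
  fixes a ca A Rc S T :: complex
  assumes "a \<noteq> 0" "ca \<noteq> 0" "A \<noteq> 0" "Rc \<noteq> 0"
  shows "(a*ca)^2 / (16 * A * Rc) * (S / a^2) * (T / ca^2) = (A / Rc) * (- (1 / (4 * \<i>)) * S / A) * ((1 / (4 * \<i>)) * T / A)"
  using assms by (simp add: field_simps power2_eq_square)

lemma sum3: "(\<Sum>i\<in>{1,2,3::nat}. f i) = f 1 + f 2 + (f 3 :: complex)" by simp

lemma set3: "{1..3::nat} = {1,2,3}" by auto

theorem proposition2:
  fixes z \<Phi> \<Psi> :: "nat \<Rightarrow> complex"
  assumes "Area z > 0"
  shows "(\<Sum>i\<in>{1..3::nat}. \<Sum>j\<in>{1..3::nat}. \<Phi> i * Dmat z i j * cnj (\<Psi> j))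
       = complex_of_real (Area z / (circumradius z)\<^sup>2)
         * nablabar z \<Phi> * nabla z (\<lambda>v. cnj (\<Psi> v))"
proof -
  note f = Area_facts[OF assms]
  define a where "a = z 2 - z 1"
  define b where "b = z 3 - z 1"
  define A where "A = complex_of_real (Area z)"
  define Rc where "Rc = complex_of_real ((circumradius z)\<^sup>2)"
  define P where "P = - p1 (U z)"
  have u: "U z = b / a" by (simp add: U_def a_def b_def)
  have an: "a \<noteq> 0" using f(1) by (simp add: a_def)
  have bn: "b \<noteq> 0" "b - a \<noteq> 0" using f(2) an unfolding u by auto
  have An: "A \<noteq> 0" using assms by (simp add: A_def)
  have Aeq: "A = (b * cnj a - a * cnj b) / (4 * \<i>)"
    unfolding A_def a_def b_def by (rule Area_complex)
  have Rceq: "Rc = a * cnj a * b * cnj b * ((b - a) * (cnj b - cnj a)) / (16 * A^2)"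
  proof -
    have "Rc = complex_of_real ((cmod a)^2) * complex_of_real ((cmod b)^2) * complex_of_real ((cmod (b - a))^2) / (16 * A^2)"
      unfolding Rc_def A_def circ_sq[OF assms] a_def b_def by simp
    then show ?thesis by (simp only: complex_norm_square complex_cnj_diff mult.assoc)
  qed
  have Rcn: "Rc \<noteq> 0" unfolding Rceq using an bn An by simp
  have Peq: "P = (a * cnj a)^2 / (16 * A * Rc)"
    unfolding P_def u p1_def complex_cnj_divide
    by (rule K_alg[OF an bn(1) bn(2) _ _ _ An _ Aeq Rceq]) (use an bn in \<open>auto simp flip: complex_cnj_diff\<close>)
  have D: "Dmat z i j = P * dU i z * cnj (dU j z)" if "i \<in> {1..3}" "j \<in> {1..3}" for i j
  proof -
    have "i \<in> {1,2,3}" "j \<in> {1,2,3}" using that unfolding set3 .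
    then show ?thesis using outer[OF assms, of i j] unfolding Dmat_def P_def by simp
  qed
  have L: "(\<Sum>i\<in>{1..3::nat}. \<Sum>j\<in>{1..3::nat}. \<Phi> i * Dmat z i j * cnj (\<Psi> j))
     = P * (\<Sum>i\<in>{1..3::nat}. \<Phi> i * dU i z) * (\<Sum>j\<in>{1..3::nat}. cnj (\<Psi> j) * cnj (dU j z))"
  proof -
    have L0: "(\<Sum>i\<in>{1..3::nat}. \<Sum>j\<in>{1..3::nat}. \<Phi> i * Dmat z i j * cnj (\<Psi> j))
       = (\<Sum>i\<in>{1..3::nat}. \<Sum>j\<in>{1..3::nat}. \<Phi> i * (P * dU i z * cnj (dU j z)) * cnj (\<Psi> j))"
      by (intro sum.cong refl) (simp add: D)
    show ?thesis unfolding L0 unfolding set3 by (simp add: algebra_simps)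
  qed
  have dUs: "dU 1 z = (z 3 - z 2) / a^2" "dU 2 z = (z 1 - z 3) / a^2" "dU 3 z = (z 2 - z 1) / a^2"
  proof -
    show "dU 1 z = (z 3 - z 2) / a^2" by (simp add: dU_def a_def)
    show "dU 2 z = (z 1 - z 3) / a^2" by (simp add: dU_def a_def minus_divide_left[symmetric])
    have "dU 3 z = 1 / a" by (simp add: dU_def a_def)
    also have "\<dots> = a / a^2" using an by (simp add: power2_eq_square)
    finally show "dU 3 z = (z 2 - z 1) / a^2" by (simp add: a_def)
  qed
  have S1: "(\<Sum>i\<in>{1..3::nat}. \<Phi> i * dU i z) = (\<Phi> 1 * (z 3 - z 2) + \<Phi> 2 * (z 1 - z 3) + \<Phi> 3 * (z 2 - z 1)) / a^2"
    unfolding set3 sum3 dUs by (simp add: add_divide_distrib)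
  have S2: "(\<Sum>j\<in>{1..3::nat}. cnj (\<Psi> j) * cnj (dU j z)) = (cnj (\<Psi> 1) * (cnj (z 3) - cnj (z 2)) + cnj (\<Psi> 2) * (cnj (z 1) - cnj (z 3))
      + cnj (\<Psi> 3) * (cnj (z 2) - cnj (z 1))) / (cnj a)^2"
    unfolding set3 sum3 dUs by (simp add: add_divide_distrib)
  have R: "complex_of_real (Area z / (circumradius z)\<^sup>2) = A / Rc"
    by (simp add: A_def Rc_def)
  show ?thesis
    unfolding L S1 S2 R Peq nablabar_def nabla_def A_def[symmetric]
    by (rule fin_alg) (use an An Rcn in auto)
qed

end
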